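(* Let $g$ be a growth control function and $(p_j)_{j\in\mathbb{N}_0}$ a strictly increasing sequence of integers with $p_0=0$, and let $\boldsymbol{M}$ be the sequence with $M_0=1$ whose quotients are $m_p=g(p_j)$ for $p_j\le p<p_{j+1}$, $j\in\mathbb{N}_0$ (so $M_p=m_0\cdots m_{p-1}$). If $\sup_{j\in\mathbb{N}}p_{j+1}/p_j=+\infty$, then $\gamma(\boldsymbol{M})=0$.
   Context: A growth control function is a strictly increasing function $g\colon[0,\infty)\to[1,\infty)$ with $g(0)=1$ and $\lim_{t\to\infty}g(t)=\infty$. A sequence $(c_p)$ is almost increasing if there is $a>0$ with $c_p\le ac_q$ for all $q\ge p$. For a sequence with quotients $m_p$, $\gamma(\boldsymbol{M})=\sup\{\mu>0:(m_p/(p+1)^\mu)_p\text{ is almost increasing}\}\in[0,\infty]$, with the value $0$ if the set is empty. *)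

theory Defs
  imports "HOL-Analysis.Analysis"
begin

definition growth_control :: "(real \<Rightarrow> real) \<Rightarrow> bool" where
  "growth_control g \<longleftrightarrow> strict_mono_on {0..} g \<and> g 0 = 1 \<and> (\<forall>t\<ge>0. g t \<ge> 1)
     \<and> (g \<longlongrightarrow> \<infinity>) at_top"

definition almost_increasing :: "(nat \<Rightarrow> real) \<Rightarrow> bool" where
  "almost_increasing c \<longleftrightarrow> (\<exists>a>0. \<forall>p q. p \<le> q \<longrightarrow> c p \<le> a * c q)"

text \<open>gamma index of a weight sequence, given through its quotient sequence m\<close>
definition gamma_idx :: "(nat \<Rightarrow> real) \<Rightarrow> ereal" where
  "gamma_idx m = (let S = {\<mu>::real. \<mu> > 0 \<and>
        almost_increasing (\<lambda>p. m p / (real p + 1) powr \<mu>)}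
     in if S = {} then 0 else Sup (ereal ` S))"

end

theory Submission
  imports Defs
begin

theorem proposition4p9:
  fixes g :: "real \<Rightarrow> real" and pj :: "nat \<Rightarrow> nat" and m :: "nat \<Rightarrow> real"
  assumes "growth_control g"
    and "strict_mono pj" and "pj 0 = 0"
    and "\<And>j p. pj j \<le> p \<Longrightarrow> p < pj (Suc j) \<Longrightarrow> m p = g (real (pj j))"
    and "\<forall>B::real. \<exists>j\<ge>1. real (pj (Suc j)) / real (pj j) > B"
  shows "gamma_idx m = 0"
proof -
  have S: "{\<mu>::real. \<mu> > 0 \<and> almost_increasing (\<lambda>p. m p / (real p + 1) powr \<mu>)} = {}"
  proof (rule ccontr)
    assume "\<not> ?thesis"
    then obtain \<mu> :: real where mu: "\<mu> > 0" and ai: "almost_increasing (\<lambda>p. m p / (real p + 1) powr \<mu>)"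
      by blast
    then obtain a where a: "a > 0" and aa: "\<And>p q. p \<le> q \<Longrightarrow> m p / (real p + 1) powr \<mu> \<le> a * (m q / (real q + 1) powr \<mu>)"
      unfolding almost_increasing_def by blast
    define b where "b = a powr (1/\<mu>)"
    have b: "b > 0" using a by (simp add: b_def)
    obtain j where j: "j \<ge> 1" and jr: "real (pj (Suc j)) / real (pj j) > 2 * b"
      using assms(5) by blast
    have mono: "pj j < pj (Suc j)" using assms(2) by (simp add: strict_mono_def)
    have pj1: "pj j \<ge> 1"
    proof -
      have "pj 0 < pj j" using assms(2) j by (simp add: strict_mono_def)
      thus ?thesis by simp
    qed
    define p where "p = pj j"
    define q where "q = pj (Suc j) - 1"
    have pq: "p \<le> q" using mono by (simp add: p_def q_def)
    have q1: "real q + 1 = real (pj (Suc j))" using mono by (simp add: q_def of_nat_diff)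
    have mp: "m p = g (real (pj j))" using assms(4)[of j p] mono by (simp add: p_def)
    have mq: "m q = g (real (pj j))" using assms(4)[of j q] mono by (simp add: q_def)
    have gpos: "g (real (pj j)) > 0"
      using assms(1) unfolding growth_control_def by (metis less_le_trans of_nat_0_le_iff zero_less_one)
    have ineq: "g (real (pj j)) / (real p + 1) powr \<mu> \<le> a * (g (real (pj j)) / real (pj (Suc j)) powr \<mu>)"
      using aa[OF pq] mp mq q1 by simp
    have P1: "(real p + 1) powr \<mu> > 0" by simp
    have P2: "real (pj (Suc j)) powr \<mu> > 0" using mono by simp
    have i2: "real (pj (Suc j)) powr \<mu> \<le> a * (real p + 1) powr \<mu>"
    proof -
      from ineq have "g (real (pj j)) * real (pj (Suc j)) powr \<mu> \<le> a * g (real (pj j)) * (real p + 1) powr \<mu>"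
        using P1 P2 by (simp add: field_simps)
      thus ?thesis using gpos by (simp add: mult.assoc)
    qed
    have h1: "real (pj (Suc j)) > 2 * b * real (pj j)"
      using jr pj1 by (simp add: field_simps)
    have h2: "2 * b * real (pj j) \<ge> b * (real p + 1)"
      using pj1 b by (simp add: p_def algebra_simps)
    have lt: "b * (real p + 1) < real (pj (Suc j))" using h1 h2 by linarith
    have "(b * (real p + 1)) powr \<mu> < real (pj (Suc j)) powr \<mu>"
      using lt b mu by (intro powr_less_mono2) auto
    moreover have "(b * (real p + 1)) powr \<mu> = a * (real p + 1) powr \<mu>"
      using a b mu by (simp add: powr_mult b_def powr_powr)
    ultimately show False using i2 by simp
  qed
  show ?thesis unfolding gamma_idx_def Let_def S by simp
qed

end
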